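(* Let $\kappa$ be a cardinal, $\mathscr A$ an infinite set and $\{X_\alpha:\alpha\in\mathscr A\}$ a family of Banach spaces each of which is $\mathrm{ASQ}_{<\kappa}$. If $\mathcal U$ is an $\aleph_1$-incomplete non-principal ultrafilter over $\mathscr A$, then the ultraproduct $(X_\alpha)_{\mathcal U}$ is $\mathrm{SQ}_{<\kappa}$.
   Context: A non-principal ultrafilter $\mathcal U$ over $\mathscr A$ is $\aleph_1$-incomplete if it is not closed under countable intersections (equivalently, there is $f:\mathscr A\to(0,\infty)$ with $\lim_{\mathcal U}f(\alpha)=0$). The ultraproduct $(X_\alpha)_{\mathcal U}$ is the quotient $\ell_\infty(\mathscr A,X_\alpha)/c_{0,\mathcal U}(\mathscr A,X_\alpha)$, where $\ell_\infty(\mathscr A,X_\alpha)$ consists of bounded families $(x_\alpha)$ with $x_\alpha\in X_\alpha$ under the sup norm and $c_{0,\mathcal U}$ is the subspace of families with $\lim_{\mathcal U}\|x_\alpha\|=0$; its norm satisfies $\|(x_\alpha)_{\mathcal U}\|=\lim_{\mathcal U}\|x_\alpha\|$. A Banach space $Z$ is $\mathrm{ASQ}_{<\kappa}$ if for every set $A\subset S_Z$ with $|A|<\kappa$ and every $\varepsilon>0$ there exists $y\in S_Z$ with $\|x\pm y\|\le 1+\varepsilon$ for all $x\in A$; $Z$ is $\mathrm{SQ}_{<\kappa}$ if for every such $A$ there exists $y\in S_Z$ with $\|x\pm y\|\le 1$ for all $x\in A$. *)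

theory Defs
  imports "HOL-Analysis.Analysis"
begin

text \<open>A (real) Banach space is modelled as a closed, i.e. complete, linear subspace of an
ambient real normed vector space; the norm is the ambient norm.\<close>
definition banach_subspace :: "'x::real_normed_vector set \<Rightarrow> bool" where
  "banach_subspace Z \<longleftrightarrow> subspace Z \<and> complete Z"

text \<open>Ultrafilters over a set I, represented as filters on the ambient type concentrated on I.\<close>
definition ultrafilter_over :: "'a set \<Rightarrow> 'a filter \<Rightarrow> bool" where
  "ultrafilter_over I U \<longleftrightarrow> U \<noteq> bot \<and> eventually (\<lambda>\<alpha>. \<alpha> \<in> I) U \<and>
     (\<forall>S \<subseteq> I. eventually (\<lambda>\<alpha>. \<alpha> \<in> S) U \<or> eventually (\<lambda>\<alpha>. \<alpha> \<in> I - S) U)"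

definition non_principal :: "'a filter \<Rightarrow> bool" where
  "non_principal U \<longleftrightarrow> (\<forall>\<alpha>. \<not> eventually (\<lambda>\<beta>. \<beta> = \<alpha>) U)"

definition aleph1_incomplete :: "'a filter \<Rightarrow> bool" where
  "aleph1_incomplete U \<longleftrightarrow> (\<exists>N :: nat \<Rightarrow> 'a set. (\<forall>n. eventually (\<lambda>\<alpha>. \<alpha> \<in> N n) U) \<and>
      \<not> eventually (\<lambda>\<alpha>. \<forall>n. \<alpha> \<in> N n) U)"

definition ASQ_lt_gen :: "'z set \<Rightarrow> ('z \<Rightarrow> real) \<Rightarrow> ('z \<Rightarrow> 'z \<Rightarrow> 'z) \<Rightarrow> ('z \<Rightarrow> 'z \<Rightarrow> 'z)
    \<Rightarrow> 'k rel \<Rightarrow> bool" where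
  "ASQ_lt_gen Z Nm pl mi \<kappa> \<longleftrightarrow>
    (\<forall>A. A \<subseteq> {z \<in> Z. Nm z = 1} \<longrightarrow> ordLess2 (card_of A) \<kappa> \<longrightarrow>
      (\<forall>\<epsilon>>0. \<exists>y\<in>Z. Nm y = 1 \<and> (\<forall>x\<in>A. Nm (pl x y) \<le> 1 + \<epsilon> \<and> Nm (mi x y) \<le> 1 + \<epsilon>)))"

definition SQ_lt_gen :: "'z set \<Rightarrow> ('z \<Rightarrow> real) \<Rightarrow> ('z \<Rightarrow> 'z \<Rightarrow> 'z) \<Rightarrow> ('z \<Rightarrow> 'z \<Rightarrow> 'z)
    \<Rightarrow> 'k rel \<Rightarrow> bool" where
  "SQ_lt_gen Z Nm pl mi \<kappa> \<longleftrightarrow>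
    (\<forall>A. A \<subseteq> {z \<in> Z. Nm z = 1} \<longrightarrow> ordLess2 (card_of A) \<kappa> \<longrightarrow>
      (\<exists>y\<in>Z. Nm y = 1 \<and> (\<forall>x\<in>A. Nm (pl x y) \<le> 1 \<and> Nm (mi x y) \<le> 1)))"

definition ASQ_lt :: "'x::real_normed_vector set \<Rightarrow> 'k rel \<Rightarrow> bool" where
  "ASQ_lt Z \<kappa> \<longleftrightarrow> ASQ_lt_gen Z norm (+) (-) \<kappa>"

definition ell_inf :: "'a set \<Rightarrow> ('a \<Rightarrow> 'x::real_normed_vector set) \<Rightarrow> ('a \<Rightarrow> 'x) set" where
  "ell_inf I X = {f. (\<forall>\<alpha>\<in>I. f \<alpha> \<in> X \<alpha>) \<and> (\<forall>\<alpha>. \<alpha> \<notin> I \<longrightarrow> f \<alpha> = 0) \<and>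
      bdd_above ((\<lambda>\<alpha>. norm (f \<alpha>)) ` I)}"

definition c0U :: "'a set \<Rightarrow> ('a \<Rightarrow> 'x::real_normed_vector set) \<Rightarrow> 'a filter \<Rightarrow> ('a \<Rightarrow> 'x) set" where
  "c0U I X U = {f \<in> ell_inf I X. ((\<lambda>\<alpha>. norm (f \<alpha>)) \<longlongrightarrow> 0) U}"

definition uclass :: "'a set \<Rightarrow> ('a \<Rightarrow> 'x::real_normed_vector set) \<Rightarrow> 'a filter \<Rightarrow> ('a \<Rightarrow> 'x)
    \<Rightarrow> ('a \<Rightarrow> 'x) set" where
  "uclass I X U f = {g \<in> ell_inf I X. (\<lambda>\<alpha>. f \<alpha> - g \<alpha>) \<in> c0U I X U}"

definition ultraproduct :: "'a set \<Rightarrow> ('a \<Rightarrow> 'x::real_normed_vector set) \<Rightarrow> 'a filter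
    \<Rightarrow> ('a \<Rightarrow> 'x) set set" where
  "ultraproduct I X U = uclass I X U ` ell_inf I X"

definition unorm :: "'a filter \<Rightarrow> ('a \<Rightarrow> 'x::real_normed_vector) set \<Rightarrow> real" where
  "unorm U c = Lim U (\<lambda>\<alpha>. norm ((SOME f. f \<in> c) \<alpha>))"

definition uadd :: "'a set \<Rightarrow> ('a \<Rightarrow> 'x::real_normed_vector set) \<Rightarrow> 'a filter
    \<Rightarrow> ('a \<Rightarrow> 'x) set \<Rightarrow> ('a \<Rightarrow> 'x) set \<Rightarrow> ('a \<Rightarrow> 'x) set" where
  "uadd I X U c d = uclass I X U (\<lambda>\<alpha>. (SOME f. f \<in> c) \<alpha> + (SOME g. g \<in> d) \<alpha>)"

definition usub :: "'a set \<Rightarrow> ('a \<Rightarrow> 'x::real_normed_vector set) \<Rightarrow> 'a filter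
    \<Rightarrow> ('a \<Rightarrow> 'x) set \<Rightarrow> ('a \<Rightarrow> 'x) set \<Rightarrow> ('a \<Rightarrow> 'x) set" where
  "usub I X U c d = uclass I X U (\<lambda>\<alpha>. (SOME f. f \<in> c) \<alpha> - (SOME g. g \<in> d) \<alpha>)"

definition ultraproduct_SQ_lt :: "'a set \<Rightarrow> ('a \<Rightarrow> 'x::real_normed_vector set) \<Rightarrow> 'a filter
    \<Rightarrow> 'k rel \<Rightarrow> bool" where
  "ultraproduct_SQ_lt I X U \<kappa> \<longleftrightarrow>
     SQ_lt_gen (ultraproduct I X U) (unorm U) (uadd I X U) (usub I X U) \<kappa>"

end

theory Submission
  imports Defs
begin

lemma ulim:
  fixes g :: "'a \<Rightarrow> real"
  assumes nb: "U \<noteq> bot" and ul: "\<forall>S. eventually (\<lambda>x. x \<in> S) U \<or> eventually (\<lambda>x. x \<notin> S) U"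
    and bd: "eventually (\<lambda>x. norm (g x) \<le> B) U"
  shows "\<exists>L. (g \<longlongrightarrow> L) U"
proof -
  let ?F = "filtermap g U"
  have "?F \<noteq> bot" using nb by (simp add: filtermap_bot_iff)
  moreover have "eventually (\<lambda>y. y \<in> cball 0 B) ?F"
    using bd by (simp add: eventually_filtermap dist_norm)
  ultimately obtain x where x: "inf (nhds x) ?F \<noteq> bot"
    using compact_filter[THEN iffD1, OF compact_cball[of "0::real" B]] by blast
  have "(g \<longlongrightarrow> x) U"
    unfolding tendsto_def
  proof (intro allI impI)
    fix S :: "real set" assume S: "open S" "x \<in> S"
    show "eventually (\<lambda>a. g a \<in> S) U"
    proof (rule ccontr)
      assume "\<not> ?thesis"
      then have "eventually (\<lambda>a. a \<notin> {a. g a \<in> S}) U" using ul[rule_format, of "{a. g a \<in> S}"] by simp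
      then have e1: "eventually (\<lambda>y. y \<notin> S) ?F" by (simp add: eventually_filtermap)
      have e2: "eventually (\<lambda>y. y \<in> S) (nhds x)" using S eventually_nhds by blast
      have "eventually (\<lambda>y. y \<notin> S) (inf (nhds x) ?F)" by (rule filter_leD[OF inf_le2 e1])
      moreover have "eventually (\<lambda>y. y \<in> S) (inf (nhds x) ?F)" by (rule filter_leD[OF inf_le1 e2])
      ultimately have "eventually (\<lambda>y. False) (inf (nhds x) ?F)"
        by (rule eventually_elim2) auto
      then show False using x by (simp add: eventually_False)
    qed
  qed
  then show ?thesis by blast
qed

lemma tri3: "norm ((p::'x::real_normed_vector) + q - w) \<le> norm p + norm q + norm w"
  by (meson add_right_mono norm_triangle_ineq norm_triangle_ineq4 order_trans)

lemma tri3m: "norm ((p::'x::real_normed_vector) - q - w) \<le> norm p + norm q + norm w"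
  by (meson add_right_mono norm_triangle_ineq4 order_trans)

lemma lim_le1:
  fixes r e1 e2 f :: "'a \<Rightarrow> 'x::real_normed_vector"
  assumes nb: "U \<noteq> bot"
    and t1: "((\<lambda>a. norm (e1 a)) \<longlongrightarrow> 0) U" and t2: "((\<lambda>a. norm (e2 a)) \<longlongrightarrow> 0) U"
    and tf: "((\<lambda>a. norm (f a)) \<longlongrightarrow> 1) U" and te: "(eps \<longlongrightarrow> 0) U"
    and ev: "eventually (\<lambda>a. norm (r a) \<le> norm (e1 a) + norm (e2 a) + (1 + eps a + \<bar>norm (f a) - 1\<bar>)) U"
    and tr: "((\<lambda>a. norm (r a)) \<longlongrightarrow> L) U"
  shows "L \<le> 1"
proof -
  have "((\<lambda>a. norm (e1 a) + norm (e2 a) + (1 + eps a + \<bar>norm (f a) - 1\<bar>)) \<longlongrightarrow> 0 + 0 + (1 + 0 + \<bar>1 - 1\<bar>)) U"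
    by (intro tendsto_intros t1 t2 te tf)
  then have "((\<lambda>a. norm (e1 a) + norm (e2 a) + (1 + eps a + \<bar>norm (f a) - 1\<bar>)) \<longlongrightarrow> 1) U" by simp
  from tendsto_le[OF nb this tr ev] show ?thesis .
qed

lemma ell_inf_iff:
  "f \<in> ell_inf I X \<longleftrightarrow> (\<forall>\<alpha>\<in>I. f \<alpha> \<in> X \<alpha>) \<and> (\<forall>\<alpha>. \<alpha> \<notin> I \<longrightarrow> f \<alpha> = 0) \<and>
     (\<exists>B. \<forall>\<alpha>\<in>I. norm (f \<alpha>) \<le> B)"
  unfolding ell_inf_def bdd_above_def by auto

lemma class_rep:
  assumes z: "\<forall>\<alpha>\<in>I. 0 \<in> X \<alpha>" and f: "f \<in> ell_inf I X"
  shows "(SOME g. g \<in> uclass I X U f) \<in> ell_inf I X \<and>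
     ((\<lambda>\<alpha>. norm (f \<alpha> - (SOME g. g \<in> uclass I X U f) \<alpha>)) \<longlongrightarrow> 0) U"
proof -
  have "(\<lambda>\<alpha>. f \<alpha> - f \<alpha>) \<in> c0U I X U"
    using z unfolding c0U_def ell_inf_iff by auto
  then have "f \<in> uclass I X U f" using f unfolding uclass_def by auto
  then have "(SOME g. g \<in> uclass I X U f) \<in> uclass I X U f" by (rule someI[where P="\<lambda>g. g \<in> uclass I X U f"])
  then show ?thesis unfolding uclass_def c0U_def by auto
qed

lemma ell_inf_add:
  assumes s: "\<forall>\<alpha>\<in>I. subspace (X \<alpha>)" and f: "f \<in> ell_inf I X" and g: "g \<in> ell_inf I X"
  shows "(\<lambda>\<alpha>. f \<alpha> + g \<alpha>) \<in> ell_inf I X" "(\<lambda>\<alpha>. f \<alpha> - g \<alpha>) \<in> ell_inf I X"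
proof -
  obtain B1 where B1: "\<forall>\<alpha>\<in>I. norm (f \<alpha>) \<le> B1" using f unfolding ell_inf_iff by auto
  obtain B2 where B2: "\<forall>\<alpha>\<in>I. norm (g \<alpha>) \<le> B2" using g unfolding ell_inf_iff by auto
  have "\<forall>\<alpha>\<in>I. norm (f \<alpha> + g \<alpha>) \<le> B1 + B2"
    using B1 B2 by (meson add_mono norm_triangle_le)
  moreover have "\<forall>\<alpha>\<in>I. norm (f \<alpha> - g \<alpha>) \<le> B1 + B2"
    using B1 B2 by (meson add_mono norm_triangle_le_diff)
  ultimately show "(\<lambda>\<alpha>. f \<alpha> + g \<alpha>) \<in> ell_inf I X" "(\<lambda>\<alpha>. f \<alpha> - g \<alpha>) \<in> ell_inf I X"
    using f g s unfolding ell_inf_iff by (auto intro: subspace_add subspace_diff)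
qed

theorem theorem4p8:
  fixes \<kappa> :: "'k rel" and I :: "'a set" and X :: "'a \<Rightarrow> 'x::real_normed_vector set"
    and U :: "'a filter"
  assumes "Card_order \<kappa>"
    and "infinite I"
    and "\<forall>\<alpha>\<in>I. banach_subspace (X \<alpha>) \<and> ASQ_lt (X \<alpha>) \<kappa>"
    and "ultrafilter_over I U" and "non_principal U" and "aleph1_incomplete U"
  shows "ultraproduct_SQ_lt I X U \<kappa>"
proof -
  have sub: "\<forall>\<alpha>\<in>I. subspace (X \<alpha>)" using assms(3) unfolding banach_subspace_def by auto
  have z: "\<forall>\<alpha>\<in>I. 0 \<in> X \<alpha>" using sub subspace_0 by blast
  have asq: "\<And>\<alpha>. \<alpha> \<in> I \<Longrightarrow> ASQ_lt_gen (X \<alpha>) norm (+) (-) \<kappa>"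
    using assms(3) unfolding ASQ_lt_def by auto
  have nb: "U \<noteq> bot" and evI: "eventually (\<lambda>\<alpha>. \<alpha> \<in> I) U"
    and ulI: "\<forall>S \<subseteq> I. eventually (\<lambda>\<alpha>. \<alpha> \<in> S) U \<or> eventually (\<lambda>\<alpha>. \<alpha> \<in> I - S) U"
    using assms(4) unfolding ultrafilter_over_def by auto
  have ul: "\<forall>S. eventually (\<lambda>x. x \<in> S) U \<or> eventually (\<lambda>x. x \<notin> S) U"
  proof
    fix S
    have "eventually (\<lambda>\<alpha>. \<alpha> \<in> S \<inter> I) U \<or> eventually (\<lambda>\<alpha>. \<alpha> \<in> I - (S \<inter> I)) U"
      using ulI by blast
    then show "eventually (\<lambda>x. x \<in> S) U \<or> eventually (\<lambda>x. x \<notin> S) U"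
    proof
      assume "eventually (\<lambda>\<alpha>. \<alpha> \<in> S \<inter> I) U"
      then have "eventually (\<lambda>x. x \<in> S) U" by (rule eventually_mono) auto
      then show ?thesis ..
    next
      assume "eventually (\<lambda>\<alpha>. \<alpha> \<in> I - (S \<inter> I)) U"
      then have "eventually (\<lambda>x. x \<notin> S) U" by (rule eventually_mono) auto
      then show ?thesis ..
    qed
  qed
  obtain N :: "nat \<Rightarrow> 'a set" where N: "\<forall>n. eventually (\<lambda>\<alpha>. \<alpha> \<in> N n) U"
    and NB: "\<not> eventually (\<lambda>\<alpha>. \<forall>n. \<alpha> \<in> N n) U"
    using assms(6) unfolding aleph1_incomplete_def by blast
  have evNB: "eventually (\<lambda>\<alpha>. \<exists>n. \<alpha> \<notin> N n) U"
    using ul[rule_format, of "{\<alpha>. \<forall>n. \<alpha> \<in> N n}"] NB by auto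
  define d where "d \<alpha> = (LEAST n. \<alpha> \<notin> N n)" for \<alpha>
  define eps where "eps \<alpha> = 1 / (real (d \<alpha>) + 1)" for \<alpha>
  have epspos: "eps \<alpha> > 0" for \<alpha> unfolding eps_def by auto
  have epsle: "eventually (\<lambda>\<alpha>. eps \<alpha> \<le> 1 / (real n + 1)) U" for n
  proof -
    have "eventually (\<lambda>\<alpha>. \<forall>k\<le>n. \<alpha> \<in> N k) U"
    proof -
      have "eventually (\<lambda>\<alpha>. \<forall>k\<in>{..n}. \<alpha> \<in> N k) U"
        by (rule eventually_ball_finite) (use N in auto)
      then show ?thesis by (rule eventually_mono) auto
    qed
    then show ?thesis using evNB
    proof (rule eventually_elim2)
      fix \<alpha> assume a: "\<forall>k\<le>n. \<alpha> \<in> N k" "\<exists>n. \<alpha> \<notin> N n"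
      have "\<alpha> \<notin> N (d \<alpha>)" unfolding d_def by (rule LeastI_ex[OF a(2)])
      then have "n < d \<alpha>" using a(1) by (meson not_le)
      then show "eps \<alpha> \<le> 1 / (real n + 1)" unfolding eps_def
        by (simp add: frac_le)
    qed
  qed
  have te: "(eps \<longlongrightarrow> 0) U"
  proof (rule order_tendstoI)
    fix e :: real assume e: "e > 0"
    obtain n :: nat where n: "1 / e < real n" using reals_Archimedean2 by blast
    have "1 / (real n + 1) < e" using e n
      by (simp add: field_simps)
    then show "eventually (\<lambda>\<alpha>. eps \<alpha> < e) U" using epsle[of n] by (auto elim: eventually_mono)
  next
    fix e :: real assume "e < 0"
    then show "eventually (\<lambda>\<alpha>. e < eps \<alpha>) U" using epspos
      by (intro always_eventually allI) (use epspos in \<open>smt (verit)\<close>)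
  qed
  define rep where "rep c = (SOME f. f \<in> c)" for c :: "('a \<Rightarrow> 'x) set"
  have rep_in: "rep c \<in> ell_inf I X" if "c \<in> ultraproduct I X U" for c
    using that class_rep[OF z] unfolding ultraproduct_def rep_def by auto
  have rep_conv: "\<exists>L. ((\<lambda>\<alpha>. norm (g \<alpha>)) \<longlongrightarrow> L) U" if gi: "g \<in> ell_inf I X" for g
  proof -
    obtain B where "\<forall>\<alpha>\<in>I. norm (g \<alpha>) \<le> B" using gi unfolding ell_inf_iff by auto
    then have "eventually (\<lambda>\<alpha>. norm (norm (g \<alpha>)) \<le> B) U" using evI by (auto elim: eventually_mono)
    then show ?thesis by (rule ulim[OF nb ul])
  qed
  show ?thesis
    unfolding ultraproduct_SQ_lt_def SQ_lt_gen_def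
  proof (intro allI impI)
    fix A assume AS: "A \<subseteq> {z \<in> ultraproduct I X U. unorm U z = 1}" and Ak: "(card_of A, \<kappa>) \<in> ordLess"
    have tA: "((\<lambda>\<alpha>. norm (rep c \<alpha>)) \<longlongrightarrow> 1) U" if "c \<in> A" for c
    proof -
      have c: "c \<in> ultraproduct I X U" "unorm U c = 1" using AS that by auto
      obtain L where L: "((\<lambda>\<alpha>. norm (rep c \<alpha>)) \<longlongrightarrow> L) U" using rep_conv rep_in c(1) by blast
      have "unorm U c = L" unfolding unorm_def using tendsto_Lim[OF _ L] nb rep_def by simp
      then show ?thesis using L c(2) by simp
    qed
    define Aa where "Aa \<alpha> = (\<lambda>c. rep c \<alpha> /\<^sub>R norm (rep c \<alpha>)) ` {c\<in>A. rep c \<alpha> \<noteq> 0}" for \<alpha>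
    have Aak: "(card_of (Aa \<alpha>), \<kappa>) \<in> ordLess" for \<alpha>
    proof -
      have a1: "(card_of (Aa \<alpha>), card_of {c\<in>A. rep c \<alpha> \<noteq> 0}) \<in> ordLeq" unfolding Aa_def by (rule card_of_image)
      have a2: "(card_of {c\<in>A. rep c \<alpha> \<noteq> 0}, card_of A) \<in> ordLeq" by (rule card_of_mono1) auto
      show ?thesis by (rule ordLeq_ordLess_trans[OF ordLeq_transitive[OF a1 a2] Ak])
    qed
    have AaS: "Aa \<alpha> \<subseteq> {z \<in> X \<alpha>. norm z = 1}" if "\<alpha> \<in> I" for \<alpha>
    proof
      fix x assume "x \<in> Aa \<alpha>"
      then obtain c where c: "c \<in> A" "rep c \<alpha> \<noteq> 0" "x = rep c \<alpha> /\<^sub>R norm (rep c \<alpha>)"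
        unfolding Aa_def by auto
      have "rep c \<alpha> \<in> X \<alpha>" using rep_in[of c] AS c(1) that unfolding ell_inf_iff by auto
      then show "x \<in> {z \<in> X \<alpha>. norm z = 1}" using c sub that by (auto intro: subspace_scale)
    qed
    define P where "P \<alpha> y \<longleftrightarrow> y \<in> X \<alpha> \<and> norm y = 1 \<and>
        (\<forall>x\<in>Aa \<alpha>. norm (x + y) \<le> 1 + eps \<alpha> \<and> norm (x - y) \<le> 1 + eps \<alpha>)" for \<alpha> y
    have exP: "\<exists>y. P \<alpha> y" if "\<alpha> \<in> I" for \<alpha>
      using asq[OF that] AaS[OF that] Aak[of \<alpha>] epspos[of \<alpha>] unfolding ASQ_lt_gen_def P_def
      by blast
    define yv where "yv \<alpha> = (if \<alpha> \<in> I then SOME y. P \<alpha> y else 0)" for \<alpha>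
    have yvP: "P \<alpha> (yv \<alpha>)" if "\<alpha> \<in> I" for \<alpha>
      using someI_ex[OF exP[OF that]] that unfolding yv_def by simp
    have yv_ell: "yv \<in> ell_inf I X"
      unfolding ell_inf_iff using yvP unfolding P_def by (auto simp: yv_def)
    define Y where "Y = uclass I X U yv"
    have YU: "Y \<in> ultraproduct I X U" unfolding Y_def ultraproduct_def using yv_ell by blast
    define h where "h = rep Y"
    have h: "h \<in> ell_inf I X" "((\<lambda>\<alpha>. norm (yv \<alpha> - h \<alpha>)) \<longlongrightarrow> 0) U"
      using class_rep[OF z yv_ell, of U] unfolding h_def rep_def Y_def by auto
    have th: "((\<lambda>\<alpha>. norm (h \<alpha> - yv \<alpha>)) \<longlongrightarrow> 0) U"
      using h(2) by (simp add: norm_minus_commute)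
    have "unorm U Y = 1"
    proof -
      have "((\<lambda>\<alpha>. norm (h \<alpha>) - 1) \<longlongrightarrow> 0) U"
      proof (rule Lim_null_comparison[OF _ h(2)])
        show "eventually (\<lambda>\<alpha>. norm (norm (h \<alpha>) - 1) \<le> norm (yv \<alpha> - h \<alpha>)) U"
          using evI
        proof (rule eventually_mono)
          fix \<alpha> assume "\<alpha> \<in> I"
          then have "norm (yv \<alpha>) = 1" using yvP unfolding P_def by auto
          then show "norm (norm (h \<alpha>) - 1) \<le> norm (yv \<alpha> - h \<alpha>)"
            using norm_triangle_ineq3[of "h \<alpha>" "yv \<alpha>"] by (simp add: norm_minus_commute)
        qed
      qed
      then have "((\<lambda>\<alpha>. norm (h \<alpha>)) \<longlongrightarrow> 1) U" by (simp add: Lim_null[symmetric])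
      then have "Lim U (\<lambda>\<alpha>. norm (h \<alpha>)) = 1" using nb by (intro tendsto_Lim) auto
      then show ?thesis unfolding unorm_def h_def rep_def .
    qed
    moreover have key: "norm (rep c \<alpha> + yv \<alpha>) \<le> 1 + eps \<alpha> + \<bar>norm (rep c \<alpha>) - 1\<bar> \<and>
        norm (rep c \<alpha> - yv \<alpha>) \<le> 1 + eps \<alpha> + \<bar>norm (rep c \<alpha>) - 1\<bar>"
      if c: "c \<in> A" and a: "\<alpha> \<in> I" for c \<alpha>
    proof (cases "rep c \<alpha> = 0")
      case True
      then show ?thesis using yvP[OF a] epspos[of \<alpha>] unfolding P_def by auto
    next
      case False
      define u where "u = rep c \<alpha> /\<^sub>R norm (rep c \<alpha>)"
      have "u \<in> Aa \<alpha>" unfolding u_def Aa_def using c False by auto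
      then have u1: "norm (u + yv \<alpha>) \<le> 1 + eps \<alpha>" "norm (u - yv \<alpha>) \<le> 1 + eps \<alpha>"
        using yvP[OF a] unfolding P_def by auto
      have nu: "norm u = 1" using False unfolding u_def by simp
      define t where "t = (norm (rep c \<alpha>) - 1) *\<^sub>R u"
      have eq: "rep c \<alpha> = u + t"
        using False unfolding u_def t_def by (simp add: algebra_simps)
      have n2: "norm t = \<bar>norm (rep c \<alpha>) - 1\<bar>" using nu unfolding t_def by simp
      have e1: "rep c \<alpha> + yv \<alpha> = (u + yv \<alpha>) + t" using eq by (simp add: algebra_simps)
      have e2: "rep c \<alpha> - yv \<alpha> = (u - yv \<alpha>) + t" using eq by (simp add: algebra_simps)
      have "norm (rep c \<alpha> + yv \<alpha>) \<le> norm (u + yv \<alpha>) + norm t"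
        unfolding e1 by (rule norm_triangle_ineq)
      moreover have "norm (rep c \<alpha> - yv \<alpha>) \<le> norm (u - yv \<alpha>) + norm t"
        unfolding e2 by (rule norm_triangle_ineq)
      ultimately show ?thesis using u1 n2 by linarith
    qed
    moreover have "unorm U (uadd I X U c Y) \<le> 1 \<and> unorm U (usub I X U c Y) \<le> 1" if c: "c \<in> A" for c
    proof -
      have cU: "c \<in> ultraproduct I X U" using c AS by auto
      have f: "rep c \<in> ell_inf I X" using rep_in[OF cU] .
      have tf: "((\<lambda>\<alpha>. norm (rep c \<alpha>)) \<longlongrightarrow> 1) U" using tA[OF c] .
      define s1 where "s1 = (\<lambda>\<alpha>. rep c \<alpha> + h \<alpha>)"
      define s2 where "s2 = (\<lambda>\<alpha>. rep c \<alpha> - h \<alpha>)"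
      have s1: "s1 \<in> ell_inf I X" and s2: "s2 \<in> ell_inf I X"
        using ell_inf_add[OF sub f h(1)] unfolding s1_def s2_def by auto
      define r1 where "r1 = rep (uclass I X U s1)"
      define r2 where "r2 = rep (uclass I X U s2)"
      have r1: "r1 \<in> ell_inf I X" "((\<lambda>\<alpha>. norm (s1 \<alpha> - r1 \<alpha>)) \<longlongrightarrow> 0) U"
        using class_rep[OF z s1, of U] unfolding r1_def rep_def by auto
      have r2: "r2 \<in> ell_inf I X" "((\<lambda>\<alpha>. norm (s2 \<alpha> - r2 \<alpha>)) \<longlongrightarrow> 0) U"
        using class_rep[OF z s2, of U] unfolding r2_def rep_def by auto
      have ua: "uadd I X U c Y = uclass I X U s1"
        unfolding uadd_def s1_def h_def rep_def ..
      have us: "usub I X U c Y = uclass I X U s2"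
        unfolding usub_def s2_def h_def rep_def ..
      obtain L1 where L1: "((\<lambda>\<alpha>. norm (r1 \<alpha>)) \<longlongrightarrow> L1) U" using rep_conv[OF r1(1)] by blast
      obtain L2 where L2: "((\<lambda>\<alpha>. norm (r2 \<alpha>)) \<longlongrightarrow> L2) U" using rep_conv[OF r2(1)] by blast
      have u1: "unorm U (uadd I X U c Y) = L1"
        unfolding ua unorm_def using tendsto_Lim[OF _ L1] nb unfolding r1_def rep_def by simp
      have u2: "unorm U (usub I X U c Y) = L2"
        unfolding us unorm_def using tendsto_Lim[OF _ L2] nb unfolding r2_def rep_def by simp
      have "L1 \<le> 1"
      proof (rule lim_le1[OF nb r1(2) th tf te _ L1])
        show "eventually (\<lambda>a. norm (r1 a) \<le> norm (s1 a - r1 a) + norm (h a - yv a) +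
            (1 + eps a + \<bar>norm (rep c a) - 1\<bar>)) U"
          using evI
        proof (rule eventually_mono)
          fix a assume a: "a \<in> I"
          have "r1 a = (rep c a + yv a) + (h a - yv a) - (s1 a - r1 a)"
            unfolding s1_def by (simp add: algebra_simps)
          then have "norm (r1 a) = norm ((rep c a + yv a) + (h a - yv a) - (s1 a - r1 a))"
            by (rule arg_cong)
          then have "norm (r1 a) \<le> norm (rep c a + yv a) + norm (h a - yv a) + norm (s1 a - r1 a)"
            using tri3[of "rep c a + yv a" "h a - yv a" "s1 a - r1 a"] by linarith
          then show "norm (r1 a) \<le> norm (s1 a - r1 a) + norm (h a - yv a) +
            (1 + eps a + \<bar>norm (rep c a) - 1\<bar>)" using key[OF c a] by linarith
        qed
      qed
      moreover have "L2 \<le> 1"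
      proof (rule lim_le1[OF nb r2(2) th tf te _ L2])
        show "eventually (\<lambda>a. norm (r2 a) \<le> norm (s2 a - r2 a) + norm (h a - yv a) +
            (1 + eps a + \<bar>norm (rep c a) - 1\<bar>)) U"
          using evI
        proof (rule eventually_mono)
          fix a assume a: "a \<in> I"
          have "r2 a = (rep c a - yv a) - (h a - yv a) - (s2 a - r2 a)"
            unfolding s2_def by (simp add: algebra_simps)
          then have "norm (r2 a) = norm ((rep c a - yv a) - (h a - yv a) - (s2 a - r2 a))"
            by (rule arg_cong)
          then have "norm (r2 a) \<le> norm (rep c a - yv a) + norm (h a - yv a) + norm (s2 a - r2 a)"
            using tri3m[of "rep c a - yv a" "h a - yv a" "s2 a - r2 a"] by linarith
          then show "norm (r2 a) \<le> norm (s2 a - r2 a) + norm (h a - yv a) +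
            (1 + eps a + \<bar>norm (rep c a) - 1\<bar>)" using key[OF c a] by linarith
        qed
      qed
      ultimately show ?thesis using u1 u2 by simp
    qed
    ultimately show "\<exists>y\<in>ultraproduct I X U. unorm U y = 1 \<and>
        (\<forall>x\<in>A. unorm U (uadd I X U x y) \<le> 1 \<and> unorm U (usub I X U x y) \<le> 1)"
      using YU by blast
  qed
qed

end
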